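(* Let $X=(x_0,\ldots,x_6)$ with $x_0<x_1<\cdots<x_6$, and write $d_{i,j}=x_j-x_i$ for $i<j$. There exists a terrain $T$ with points $p_0,\ldots,p_6$ (left to right) having $x$-coordinates $p_i^x=x_i$ for all $i$ and whose visibility graph is $G'$ (with $v_i$ corresponding to $p_i$) if and only if $$d_{0,1}d_{2,3}d_{3,4}d_{5,6}>d_{1,2}d_{4,5}d_{0,3}d_{3,6}.$$
   Context: A terrain is an $x$-monotone polygonal chain with points $p_0,\ldots,p_{n-1}$ listed left to right (strictly increasing $x$-coordinates), consecutive points joined by segments. Points $p_i,p_j$ ($i<j$) see each other iff the open segment $\overline{p_ip_j}$ lies strictly above the terrain, i.e. iff $j=i+1$ or every $p_k$ with $i<k<j$ lies strictly below $\overline{p_ip_j}$. The visibility graph has vertex $v_i$ for $p_i$ and edge $\{v_i,v_j\}$ iff $p_i,p_j$ see each other. $G'$ is the graph on $v_0,\ldots,v_6$ with edge set $\{v_0v_1,v_0v_3,v_0v_4,v_0v_5,v_0v_6,v_1v_2,v_1v_3,v_1v_6,v_2v_3,v_2v_6,v_3v_4,v_3v_5,v_3v_6,v_4v_5,v_5v_6\}$. *)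

theory Defs
  imports Main "HOL.Real"
begin

text \<open>A terrain with n points is given by the x- and y-coordinate functions
  px, py :: nat \<Rightarrow> real on indices 0..n-1, with strictly increasing px.\<close>

definition is_terrain :: "nat \<Rightarrow> (nat \<Rightarrow> real) \<Rightarrow> bool" where
  "is_terrain n px \<longleftrightarrow> (\<forall>i j. i < j \<and> j < n \<longrightarrow> px i < px j)"

definition strictly_below :: "(nat \<Rightarrow> real) \<Rightarrow> (nat \<Rightarrow> real) \<Rightarrow> nat \<Rightarrow> nat \<Rightarrow> nat \<Rightarrow> bool" where
  "strictly_below px py i j k \<longleftrightarrow>
     py k < py i + (py j - py i) * (px k - px i) / (px j - px i)"

definition sees :: "(nat \<Rightarrow> real) \<Rightarrow> (nat \<Rightarrow> real) \<Rightarrow> nat \<Rightarrow> nat \<Rightarrow> bool" where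
  "sees px py i j \<longleftrightarrow> j = i + 1 \<or> (\<forall>k. i < k \<and> k < j \<longrightarrow> strictly_below px py i j k)"

definition vis_edge :: "nat \<Rightarrow> (nat \<Rightarrow> real) \<Rightarrow> (nat \<Rightarrow> real) \<Rightarrow> nat \<Rightarrow> nat \<Rightarrow> bool" where
  "vis_edge n px py a b \<longleftrightarrow> a < n \<and> b < n \<and>
     ((a < b \<and> sees px py a b) \<or> (b < a \<and> sees px py b a))"

definition G'_edges :: "nat set set" where
  "G'_edges = {{0,1},{0,3},{0,4},{0,5},{0,6},{1,2},{1,3},{1,6},{2,3},{2,6},
               {3,4},{3,5},{3,6},{4,5},{5,6}}"

end

theory Submission
  imports Defs
begin

lemma sb_mult:
  assumes "px i < px j"
  shows "strictly_below px py i j k \<longleftrightarrow> (py k - py i) * (px j - px i) < (py j - py i) * (px k - px i)"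
proof -
  have "strictly_below px py i j k \<longleftrightarrow> py k - py i < (py j - py i) * (px k - px i) / (px j - px i)"
    unfolding strictly_below_def by linarith
  also have "\<dots> \<longleftrightarrow> (py k - py i) * (px j - px i) < (py j - py i) * (px k - px i)"
    using assms by (simp add: less_divide_eq)
  finally show ?thesis .
qed

lemma sb_shear:
  assumes "px i \<noteq> px j"
  shows "strictly_below px (\<lambda>k. py k + a * px k + b) i j k \<longleftrightarrow> strictly_below px py i j k"
proof -
  have d: "px j - px i \<noteq> 0" using assms by simp
  have "((py j + a * px j + b) - (py i + a * px i + b)) * (px k - px i) / (px j - px i)
        = (py j - py i) * (px k - px i) / (px j - px i) + a * (px k - px i)"
    using d by (simp add: field_simps)
  then show ?thesis unfolding strictly_below_def by (simp add: algebra_simps)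
qed

lemma sees_shear:
  assumes "i < j \<Longrightarrow> px i < px j"
  shows "sees px (\<lambda>k. py k + a * px k + b) i j \<longleftrightarrow> sees px py i j"
proof (cases "i < j")
  case True
  then have "px i \<noteq> px j" using assms by simp
  then show ?thesis unfolding sees_def using sb_shear by presburger
next
  case False
  then show ?thesis unfolding sees_def by auto
qed

lemma graph_iff:
  "(\<forall>a b. a \<le> 6 \<and> b \<le> 6 \<longrightarrow> (vis_edge 7 x py a b \<longleftrightarrow> {a, b} \<in> G'_edges)) \<longleftrightarrow>
   (\<not> sees x py 0 2 \<and> sees x py 0 3 \<and> sees x py 0 4 \<and> sees x py 0 5 \<and> sees x py 0 6 \<and>
    sees x py 1 3 \<and> \<not> sees x py 1 4 \<and> \<not> sees x py 1 5 \<and> sees x py 1 6 \<and>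
    \<not> sees x py 2 4 \<and> \<not> sees x py 2 5 \<and> sees x py 2 6 \<and>
    sees x py 3 5 \<and> sees x py 3 6 \<and> \<not> sees x py 4 6)" (is "?L \<longleftrightarrow> ?R")
proof
  assume L: ?L
  show ?R
    using L[rule_format, of 0 2] L[rule_format, of 0 3] L[rule_format, of 0 4] L[rule_format, of 0 5]
      L[rule_format, of 0 6] L[rule_format, of 1 3] L[rule_format, of 1 4] L[rule_format, of 1 5]
      L[rule_format, of 1 6] L[rule_format, of 2 4] L[rule_format, of 2 5] L[rule_format, of 2 6]
      L[rule_format, of 3 5] L[rule_format, of 3 6] L[rule_format, of 4 6]
    by (simp add: vis_edge_def G'_edges_def doubleton_eq_iff)
next
  assume R: ?R
  have c: "sees x py 0 1" "sees x py 1 2" "sees x py 2 3" "sees x py 3 4" "sees x py 4 5" "sees x py 5 6"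
    by (simp_all add: sees_def)
  show ?L
  proof (intro allI impI)
    fix a b :: nat
    assume ab: "a \<le> 6 \<and> b \<le> 6"
    then have "a = 0 \<or> a = 1 \<or> a = 2 \<or> a = 3 \<or> a = 4 \<or> a = 5 \<or> a = 6"
      "b = 0 \<or> b = 1 \<or> b = 2 \<or> b = 3 \<or> b = 4 \<or> b = 5 \<or> b = 6" by auto
    then show "vis_edge 7 x py a b \<longleftrightarrow> {a, b} \<in> G'_edges"
      apply (elim disjE)
      using R c by (simp_all add: vis_edge_def G'_edges_def doubleton_eq_iff)
  qed
qed

lemma sees_expand:
  shows "sees px py 0 2 \<longleftrightarrow> strictly_below px py 0 2 1"
  and "sees px py 0 3 \<longleftrightarrow> strictly_below px py 0 3 1 \<and> strictly_below px py 0 3 2"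
  and "sees px py 0 4 \<longleftrightarrow> strictly_below px py 0 4 1 \<and> strictly_below px py 0 4 2 \<and> strictly_below px py 0 4 3"
  and "sees px py 0 5 \<longleftrightarrow> strictly_below px py 0 5 1 \<and> strictly_below px py 0 5 2 \<and> strictly_below px py 0 5 3 \<and> strictly_below px py 0 5 4"
  and "sees px py 0 6 \<longleftrightarrow> strictly_below px py 0 6 1 \<and> strictly_below px py 0 6 2 \<and> strictly_below px py 0 6 3 \<and> strictly_below px py 0 6 4 \<and> strictly_below px py 0 6 5"
  and "sees px py 1 3 \<longleftrightarrow> strictly_below px py 1 3 2"
  and "sees px py 1 4 \<longleftrightarrow> strictly_below px py 1 4 2 \<and> strictly_below px py 1 4 3"
  and "sees px py 1 5 \<longleftrightarrow> strictly_below px py 1 5 2 \<and> strictly_below px py 1 5 3 \<and> strictly_below px py 1 5 4"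
  and "sees px py 1 6 \<longleftrightarrow> strictly_below px py 1 6 2 \<and> strictly_below px py 1 6 3 \<and> strictly_below px py 1 6 4 \<and> strictly_below px py 1 6 5"
  and "sees px py 2 4 \<longleftrightarrow> strictly_below px py 2 4 3"
  and "sees px py 2 5 \<longleftrightarrow> strictly_below px py 2 5 3 \<and> strictly_below px py 2 5 4"
  and "sees px py 2 6 \<longleftrightarrow> strictly_below px py 2 6 3 \<and> strictly_below px py 2 6 4 \<and> strictly_below px py 2 6 5"
  and "sees px py 3 5 \<longleftrightarrow> strictly_below px py 3 5 4"
  and "sees px py 3 6 \<longleftrightarrow> strictly_below px py 3 6 4 \<and> strictly_below px py 3 6 5"
  and "sees px py 4 6 \<longleftrightarrow> strictly_below px py 4 6 5"
  by (simp_all add: sees_def numeral_eq_Suc less_Suc_eq all_conj_distrib conj_disj_distribL all_simps)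

lemma fwd_alg:
  fixes x0 x1 x2 x3 x4 x5 x6 y0 y1 y2 y4 y5 :: real
  assumes o: "x0 < x1" "x1 < x2" "x2 < x3" "x3 < x4" "x4 < x5" "x5 < x6"
  and F1: "0 < y0 * (x4 - x3) + y4 * (x3 - x0)"
  and F2: "y5 * (x3 - x1) + y1 * (x5 - x3) \<le> 0"
  and F3: "0 < y2"
  and F4: "y0 * (x2 - x1) + y2 * (x1 - x0) \<le> y1 * (x2 - x0)"
  and F5: "y4 * (x6 - x5) \<le> y5 * (x6 - x4)"
  and F6: "y4 < 0"
  shows "(x1 - x0) * (x3 - x2) * (x4 - x3) * (x6 - x5) > (x2 - x1) * (x5 - x4) * (x3 - x0) * (x6 - x3)"
proof -
  define Y where "Y = - y4"
  have Y: "0 < Y" using F6 Y_def by simp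
  have s1: "y0 * (x2 - x1) < y1 * (x2 - x0)"
    using F4 F3 o mult_pos_pos[of y2 "x1 - x0"] by linarith
  have s2: "Y * (x3 - x0) < y0 * (x4 - x3)" using F1 Y_def by simp
  have "y0 * (x2 - x1) * (x4 - x3) < y1 * (x2 - x0) * (x4 - x3)"
    using s1 o by (simp add: mult_strict_right_mono)
  moreover have "Y * (x3 - x0) * (x2 - x1) < y0 * (x4 - x3) * (x2 - x1)"
    using s2 o by (simp add: mult_strict_right_mono)
  ultimately have s3: "Y * (x3 - x0) * (x2 - x1) < y1 * (x2 - x0) * (x4 - x3)"
    by (simp add: algebra_simps)
  have s4: "y1 * (x5 - x3) \<le> - y5 * (x3 - x1)" using F2 by simp
  have s5: "- y5 * (x6 - x4) \<le> Y * (x6 - x5)" using F5 Y_def by simp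
  have "y1 * (x5 - x3) * (x6 - x4) \<le> (- y5 * (x3 - x1)) * (x6 - x4)"
    by (rule mult_right_mono[OF s4]) (use o in simp)
  moreover have "(- y5 * (x6 - x4)) * (x3 - x1) \<le> Y * (x6 - x5) * (x3 - x1)"
    by (rule mult_right_mono[OF s5]) (use o in simp)
  ultimately have s6: "y1 * (x5 - x3) * (x6 - x4) \<le> Y * (x6 - x5) * (x3 - x1)"
    by (simp add: algebra_simps)
  have "Y * (x3 - x0) * (x2 - x1) * ((x5 - x3) * (x6 - x4)) < y1 * (x2 - x0) * (x4 - x3) * ((x5 - x3) * (x6 - x4))"
    using s3 o by (simp add: mult_strict_right_mono)
  moreover have "y1 * (x5 - x3) * (x6 - x4) * ((x2 - x0) * (x4 - x3)) \<le> Y * (x6 - x5) * (x3 - x1) * ((x2 - x0) * (x4 - x3))"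
    by (rule mult_right_mono[OF s6]) (use o in simp)
  ultimately have "Y * ((x3 - x0) * (x2 - x1) * (x5 - x3) * (x6 - x4)) < Y * ((x6 - x5) * (x3 - x1) * (x2 - x0) * (x4 - x3))"
    by (simp add: algebra_simps)
  then have s7: "(x3 - x0) * (x2 - x1) * (x5 - x3) * (x6 - x4) < (x6 - x5) * (x3 - x1) * (x2 - x0) * (x4 - x3)"
    using Y by simp
  have "(x6 - x5) * (x3 - x1) * (x2 - x0) * (x4 - x3) - (x3 - x0) * (x2 - x1) * (x5 - x3) * (x6 - x4)
     = (x1 - x0) * (x3 - x2) * (x4 - x3) * (x6 - x5) - (x2 - x1) * (x5 - x4) * (x3 - x0) * (x6 - x3)"
    by algebra
  then show ?thesis using s7 by linarith
qed

lemma sb_slope: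
  assumes "px i < px k" "px k < px j"
  shows "strictly_below px py i j k \<longleftrightarrow> (py k - py i) / (px k - px i) < (py j - py i) / (px j - px i)"
proof -
  have "strictly_below px py i j k \<longleftrightarrow> (py k - py i) * (px j - px i) < (py j - py i) * (px k - px i)"
    using assms by (intro sb_mult) simp
  also have "\<dots> \<longleftrightarrow> (py k - py i) / (px k - px i) < (py j - py i) / (px j - px i)"
    using assms by (simp add: divide_less_eq less_divide_eq mult.commute mult.left_commute)
  finally show ?thesis .
qed

lemma fwd_core:
  fixes x y :: "nat \<Rightarrow> real"
  assumes o: "x 0 < x 1" "x 1 < x 2" "x 2 < x 3" "x 3 < x 4" "x 4 < x 5" "x 5 < x 6"
  and y3: "y 3 = 0" and y6: "y 6 = 0"
  and A1: "strictly_below x y 0 4 3"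
  and A2: "\<not> strictly_below x y 1 5 2 \<or> \<not> strictly_below x y 1 5 3 \<or> \<not> strictly_below x y 1 5 4"
  and A3: "\<not> strictly_below x y 1 4 2 \<or> \<not> strictly_below x y 1 4 3"
  and A4: "strictly_below x y 1 3 2"
  and A5: "strictly_below x y 2 6 3"
  and A6: "\<not> strictly_below x y 0 2 1"
  and A7: "\<not> strictly_below x y 4 6 5"
  and A8: "strictly_below x y 3 6 4"
  shows "(x 1 - x 0) * (x 3 - x 2) * (x 4 - x 3) * (x 6 - x 5) > (x 2 - x 1) * (x 5 - x 4) * (x 3 - x 0) * (x 6 - x 3)"
proof -
  define t where "t k = (y k - y 1) / (x k - x 1)" for k
  have "t 2 < t 3" using A4 sb_slope[of x 1 2 3 y] o unfolding t_def by simp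
  moreover have "t 4 \<le> t 2 \<or> t 4 \<le> t 3"
    using A3 sb_slope[of x 1 2 4 y] sb_slope[of x 1 3 4 y] o unfolding t_def by force
  moreover have "t 5 \<le> t 2 \<or> t 5 \<le> t 3 \<or> t 5 \<le> t 4"
    using A2 sb_slope[of x 1 2 5 y] sb_slope[of x 1 3 5 y] sb_slope[of x 1 4 5 y] o unfolding t_def by force
  ultimately have "t 5 \<le> t 3" by linarith
  then have "(y 5 - y 1) / (x 5 - x 1) \<le> (y 3 - y 1) / (x 3 - x 1)" unfolding t_def .
  then have "(y 5 - y 1) * (x 3 - x 1) \<le> (y 3 - y 1) * (x 5 - x 1)"
    using o by (simp add: divide_le_eq le_divide_eq mult.commute mult.left_commute)
  then have F2: "y 5 * (x 3 - x 1) + y 1 * (x 5 - x 3) \<le> 0" using y3 by (simp add: algebra_simps)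
  have "(y 3 - y 0) * (x 4 - x 0) < (y 4 - y 0) * (x 3 - x 0)"
    using A1 sb_mult[of x 0 4 y 3] o by simp
  then have F1: "0 < y 0 * (x 4 - x 3) + y 4 * (x 3 - x 0)" using y3 by (simp add: algebra_simps)
  have "(y 3 - y 2) * (x 6 - x 2) < (y 6 - y 2) * (x 3 - x 2)"
    using A5 sb_mult[of x 2 6 y 3] o by simp
  then have "y 2 * (x 6 - x 3) > 0" using y3 y6 by (simp add: algebra_simps)
  then have F3: "0 < y 2" using o by (simp add: zero_less_mult_iff)
  have "\<not> (y 1 - y 0) * (x 2 - x 0) < (y 2 - y 0) * (x 1 - x 0)"
    using A6 sb_mult[of x 0 2 y 1] o by simp
  then have F4: "y 0 * (x 2 - x 1) + y 2 * (x 1 - x 0) \<le> y 1 * (x 2 - x 0)" by (simp add: algebra_simps)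
  have "\<not> (y 5 - y 4) * (x 6 - x 4) < (y 6 - y 4) * (x 5 - x 4)"
    using A7 sb_mult[of x 4 6 y 5] o by simp
  then have F5: "y 4 * (x 6 - x 5) \<le> y 5 * (x 6 - x 4)" using y6 by (simp add: algebra_simps)
  have "(y 4 - y 3) * (x 6 - x 3) < (y 6 - y 3) * (x 4 - x 3)"
    using A8 sb_mult[of x 3 6 y 4] o by simp
  then have "y 4 * (x 6 - x 3) < 0" using y3 y6 by simp
  then have F6: "y 4 < 0" using o by (simp add: mult_less_0_iff)
  show ?thesis using fwd_alg[OF o F1 F2 F3 F4 F5 F6] .
qed


locale bwd_setup =
  fixes u1 u2 u3 u4 u5 u6 g Y0 Y1 Y2 Y3 Y4 Y5 Y6 :: real
  assumes p: "0<u1" "0<u2" "0<u3" "0<u4" "0<u5" "0<u6" "0 < g"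
  and gdef: "g = u1*u3*u4*u6 - u2*u5*(u1+u2+u3)*(u4+u5+u6)"
  and Y: "Y0 = 2*u1*u6*(u2+u3)*u4*(u1+u2) - u1*g" "Y1 = 2*u1*u6*(u2+u3)*u4*u2" "Y2 = g*u2" "Y3 = 0"
    "Y4 = -(2*u1*(u5+u6)*(u4+u5)*u4*u2)" "Y5 = -(2*u1*u6*(u4+u5)*u4*u2)" "Y6 = 0"
begin

lemma chk_0_2_1: "\<not> ((Y1 - Y0) * (u1+u2) < (Y2 - Y0) * (u1))"
proof -
  have e: "(Y1 - Y0) * (u1+u2) - (Y2 - Y0) * (u1) = 0" unfolding Y gdef by algebra
  then show ?thesis by linarith
qed

lemma chk_0_3_1: "(Y1 - Y0) * (u1+u2+u3) < (Y3 - Y0) * (u1)"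
proof -
  have e: "(Y3 - Y0) * (u1) - (Y1 - Y0) * (u1+u2+u3) = u1*u2*u3*u3*u5*u6 + u1*u2*u3*u3*u5*u5 + u1*u2*u3*u3*u4*u5 + 2*u1*u2*u2*u3*u5*u6 + 2*u1*u2*u2*u3*u5*u5 + 2*u1*u2*u2*u3*u4*u5 + u1*u2*u2*u2*u5*u6 + u1*u2*u2*u2*u5*u5 + u1*u2*u2*u2*u4*u5 + u1*u1*u3*u3*u4*u6 + u1*u1*u2*u3*u5*u6 + u1*u1*u2*u3*u5*u5 + u1*u1*u2*u3*u4*u6 + u1*u1*u2*u3*u4*u5 + u1*u1*u2*u2*u5*u6 + u1*u1*u2*u2*u5*u5 + u1*u1*u2*u2*u4*u5" unfolding Y gdef by algebra
  have "0 < u1*u2*u3*u3*u5*u6 + u1*u2*u3*u3*u5*u5 + u1*u2*u3*u3*u4*u5 + 2*u1*u2*u2*u3*u5*u6 + 2*u1*u2*u2*u3*u5*u5 + 2*u1*u2*u2*u3*u4*u5 + u1*u2*u2*u2*u5*u6 + u1*u2*u2*u2*u5*u5 + u1*u2*u2*u2*u4*u5 + u1*u1*u3*u3*u4*u6 + u1*u1*u2*u3*u5*u6 + u1*u1*u2*u3*u5*u5 + u1*u1*u2*u3*u4*u6 + u1*u1*u2*u3*u4*u5 + u1*u1*u2*u2*u5*u6 + u1*u1*u2*u2*u5*u5 + u1*u1*u2*u2*u4*u5" using p by (intro add_pos_pos mult_pos_pos; simp)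
  then show ?thesis using e by linarith
qed

lemma chk_0_3_2: "(Y2 - Y0) * (u1+u2+u3) < (Y3 - Y0) * (u1+u2)"
proof -
  have e: "(Y3 - Y0) * (u1+u2) - (Y2 - Y0) * (u1+u2+u3) = u2*u2*u3*u3*u5*u6 + u2*u2*u3*u3*u5*u5 + u2*u2*u3*u3*u4*u5 + 2*u2*u2*u2*u3*u5*u6 + 2*u2*u2*u2*u3*u5*u5 + 2*u2*u2*u2*u3*u4*u5 + u2*u2*u2*u2*u5*u6 + u2*u2*u2*u2*u5*u5 + u2*u2*u2*u2*u4*u5 + u1*u2*u3*u3*u5*u6 + u1*u2*u3*u3*u5*u5 + u1*u2*u3*u3*u4*u6 + u1*u2*u3*u3*u4*u5 + 3*u1*u2*u2*u3*u5*u6 + 3*u1*u2*u2*u3*u5*u5 + u1*u2*u2*u3*u4*u6 + 3*u1*u2*u2*u3*u4*u5 + 2*u1*u2*u2*u2*u5*u6 + 2*u1*u2*u2*u2*u5*u5 + 2*u1*u2*u2*u2*u4*u5 + u1*u1*u3*u3*u4*u6 + u1*u1*u2*u3*u5*u6 + u1*u1*u2*u3*u5*u5 + u1*u1*u2*u3*u4*u6 + u1*u1*u2*u3*u4*u5 + u1*u1*u2*u2*u5*u6 + u1*u1*u2*u2*u5*u5 + u1*u1*u2*u2*u4*u5" unfolding Y gdef by algebra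
  have "0 < u2*u2*u3*u3*u5*u6 + u2*u2*u3*u3*u5*u5 + u2*u2*u3*u3*u4*u5 + 2*u2*u2*u2*u3*u5*u6 + 2*u2*u2*u2*u3*u5*u5 + 2*u2*u2*u2*u3*u4*u5 + u2*u2*u2*u2*u5*u6 + u2*u2*u2*u2*u5*u5 + u2*u2*u2*u2*u4*u5 + u1*u2*u3*u3*u5*u6 + u1*u2*u3*u3*u5*u5 + u1*u2*u3*u3*u4*u6 + u1*u2*u3*u3*u4*u5 + 3*u1*u2*u2*u3*u5*u6 + 3*u1*u2*u2*u3*u5*u5 + u1*u2*u2*u3*u4*u6 + 3*u1*u2*u2*u3*u4*u5 + 2*u1*u2*u2*u2*u5*u6 + 2*u1*u2*u2*u2*u5*u5 + 2*u1*u2*u2*u2*u4*u5 + u1*u1*u3*u3*u4*u6 + u1*u1*u2*u3*u5*u6 + u1*u1*u2*u3*u5*u5 + u1*u1*u2*u3*u4*u6 + u1*u1*u2*u3*u4*u5 + u1*u1*u2*u2*u5*u6 + u1*u1*u2*u2*u5*u5 + u1*u1*u2*u2*u4*u5" using p by (intro add_pos_pos mult_pos_pos; simp)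
  then show ?thesis using e by linarith
qed

lemma chk_0_4_1: "(Y1 - Y0) * (u1+u2+u3+u4) < (Y4 - Y0) * (u1)"
proof -
  have e: "(Y4 - Y0) * (u1) - (Y1 - Y0) * (u1+u2+u3+u4) = (u1)*(u2+u3+u4)*g + 2*(u1+u2+u3+u4)*(u1)*(u2)*(u2+u3)*(u4+u5+u6)*(u5)" unfolding Y gdef by algebra
  have "0 < (u1)*(u2+u3+u4)*g + 2*(u1+u2+u3+u4)*(u1)*(u2)*(u2+u3)*(u4+u5+u6)*(u5)" using p by (intro add_pos_pos mult_pos_pos; simp)
  then show ?thesis using e by linarith
qed

lemma chk_0_4_2: "(Y2 - Y0) * (u1+u2+u3+u4) < (Y4 - Y0) * (u1+u2)"
proof -
  have e: "(Y4 - Y0) * (u1+u2) - (Y2 - Y0) * (u1+u2+u3+u4) = (u1)*(u3+u4)*g + (u1+u2+u3+u4)*(u2)*((u1)*(u3)*((u5+u6)*(u4+u5) + (u4+u5+u6)*(u5)) + ((u2)*(u5)*(u1+u2+u3)*(u4+u5+u6)))" unfolding Y gdef by algebra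
  have "0 < (u1)*(u3+u4)*g + (u1+u2+u3+u4)*(u2)*((u1)*(u3)*((u5+u6)*(u4+u5) + (u4+u5+u6)*(u5)) + ((u2)*(u5)*(u1+u2+u3)*(u4+u5+u6)))" using p by (intro add_pos_pos mult_pos_pos; simp)
  then show ?thesis using e by linarith
qed

lemma chk_0_4_3: "(Y3 - Y0) * (u1+u2+u3+u4) < (Y4 - Y0) * (u1+u2+u3)"
proof -
  have e: "(Y4 - Y0) * (u1+u2+u3) - (Y3 - Y0) * (u1+u2+u3+u4) = (u1)*(u4)*g" unfolding Y gdef by algebra
  have "0 < (u1)*(u4)*g" using p by (intro add_pos_pos mult_pos_pos; simp)
  then show ?thesis using e by linarith
qed

lemma chk_0_5_1: "(Y1 - Y0) * (u1+u2+u3+u4+u5) < (Y5 - Y0) * (u1)"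
proof -
  have e: "(Y5 - Y0) * (u1) - (Y1 - Y0) * (u1+u2+u3+u4+u5) = u1*u2*u3*u5*u5*u6 + u1*u2*u3*u5*u5*u5 + u1*u2*u3*u4*u5*u6 + 2*u1*u2*u3*u4*u5*u5 + u1*u2*u3*u4*u4*u5 + u1*u2*u3*u3*u5*u6 + u1*u2*u3*u3*u5*u5 + u1*u2*u3*u3*u4*u5 + u1*u2*u2*u5*u5*u6 + u1*u2*u2*u5*u5*u5 + u1*u2*u2*u4*u5*u6 + 2*u1*u2*u2*u4*u5*u5 + u1*u2*u2*u4*u4*u5 + 2*u1*u2*u2*u3*u5*u6 + 2*u1*u2*u2*u3*u5*u5 + 2*u1*u2*u2*u3*u4*u5 + u1*u2*u2*u2*u5*u6 + u1*u2*u2*u2*u5*u5 + u1*u2*u2*u2*u4*u5 + u1*u1*u3*u4*u5*u6 + u1*u1*u3*u4*u4*u6 + u1*u1*u3*u3*u4*u6 + u1*u1*u2*u5*u5*u6 + u1*u1*u2*u5*u5*u5 + u1*u1*u2*u4*u5*u6 + 2*u1*u1*u2*u4*u5*u5 + u1*u1*u2*u4*u4*u5 + u1*u1*u2*u3*u5*u6 + u1*u1*u2*u3*u5*u5 + u1*u1*u2*u3*u4*u6 + u1*u1*u2*u3*u4*u5 + u1*u1*u2*u2*u5*u6 + u1*u1*u2*u2*u5*u5 + u1*u1*u2*u2*u4*u5" unfolding Y gdef by algebra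
  have "0 < u1*u2*u3*u5*u5*u6 + u1*u2*u3*u5*u5*u5 + u1*u2*u3*u4*u5*u6 + 2*u1*u2*u3*u4*u5*u5 + u1*u2*u3*u4*u4*u5 + u1*u2*u3*u3*u5*u6 + u1*u2*u3*u3*u5*u5 + u1*u2*u3*u3*u4*u5 + u1*u2*u2*u5*u5*u6 + u1*u2*u2*u5*u5*u5 + u1*u2*u2*u4*u5*u6 + 2*u1*u2*u2*u4*u5*u5 + u1*u2*u2*u4*u4*u5 + 2*u1*u2*u2*u3*u5*u6 + 2*u1*u2*u2*u3*u5*u5 + 2*u1*u2*u2*u3*u4*u5 + u1*u2*u2*u2*u5*u6 + u1*u2*u2*u2*u5*u5 + u1*u2*u2*u2*u4*u5 + u1*u1*u3*u4*u5*u6 + u1*u1*u3*u4*u4*u6 + u1*u1*u3*u3*u4*u6 + u1*u1*u2*u5*u5*u6 + u1*u1*u2*u5*u5*u5 + u1*u1*u2*u4*u5*u6 + 2*u1*u1*u2*u4*u5*u5 + u1*u1*u2*u4*u4*u5 + u1*u1*u2*u3*u5*u6 + u1*u1*u2*u3*u5*u5 + u1*u1*u2*u3*u4*u6 + u1*u1*u2*u3*u4*u5 + u1*u1*u2*u2*u5*u6 + u1*u1*u2*u2*u5*u5 + u1*u1*u2*u2*u4*u5" using p by (intro add_pos_pos mult_pos_pos; simp)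
  then show ?thesis using e by linarith
qed

lemma chk_0_5_2: "(Y2 - Y0) * (u1+u2+u3+u4+u5) < (Y5 - Y0) * (u1+u2)"
proof -
  have e: "(Y5 - Y0) * (u1+u2) - (Y2 - Y0) * (u1+u2+u3+u4+u5) = u2*u2*u3*u5*u5*u6 + u2*u2*u3*u5*u5*u5 + u2*u2*u3*u4*u5*u6 + 2*u2*u2*u3*u4*u5*u5 + u2*u2*u3*u4*u4*u5 + u2*u2*u3*u3*u5*u6 + u2*u2*u3*u3*u5*u5 + u2*u2*u3*u3*u4*u5 + u2*u2*u2*u5*u5*u6 + u2*u2*u2*u5*u5*u5 + u2*u2*u2*u4*u5*u6 + 2*u2*u2*u2*u4*u5*u5 + u2*u2*u2*u4*u4*u5 + 2*u2*u2*u2*u3*u5*u6 + 2*u2*u2*u2*u3*u5*u5 + 2*u2*u2*u2*u3*u4*u5 + u2*u2*u2*u2*u5*u6 + u2*u2*u2*u2*u5*u5 + u2*u2*u2*u2*u4*u5 + u1*u2*u3*u5*u5*u6 + u1*u2*u3*u5*u5*u5 + 2*u1*u2*u3*u4*u5*u6 + 2*u1*u2*u3*u4*u5*u5 + u1*u2*u3*u4*u4*u6 + u1*u2*u3*u4*u4*u5 + u1*u2*u3*u3*u5*u6 + u1*u2*u3*u3*u5*u5 + u1*u2*u3*u3*u4*u6 + u1*u2*u3*u3*u4*u5 + 2*u1*u2*u2*u5*u5*u6 + 2*u1*u2*u2*u5*u5*u5 + 2*u1*u2*u2*u4*u5*u6 + 4*u1*u2*u2*u4*u5*u5 + 2*u1*u2*u2*u4*u4*u5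 + 3*u1*u2*u2*u3*u5*u6 + 3*u1*u2*u2*u3*u5*u5 + u1*u2*u2*u3*u4*u6 + 3*u1*u2*u2*u3*u4*u5 + 2*u1*u2*u2*u2*u5*u6 + 2*u1*u2*u2*u2*u5*u5 + 2*u1*u2*u2*u2*u4*u5 + u1*u1*u3*u4*u5*u6 + u1*u1*u3*u4*u4*u6 + u1*u1*u3*u3*u4*u6 + u1*u1*u2*u5*u5*u6 + u1*u1*u2*u5*u5*u5 + u1*u1*u2*u4*u5*u6 + 2*u1*u1*u2*u4*u5*u5 + u1*u1*u2*u4*u4*u5 + u1*u1*u2*u3*u5*u6 + u1*u1*u2*u3*u5*u5 + u1*u1*u2*u3*u4*u6 + u1*u1*u2*u3*u4*u5 + u1*u1*u2*u2*u5*u6 + u1*u1*u2*u2*u5*u5 + u1*u1*u2*u2*u4*u5" unfolding Y gdef by algebra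
  have "0 < u2*u2*u3*u5*u5*u6 + u2*u2*u3*u5*u5*u5 + u2*u2*u3*u4*u5*u6 + 2*u2*u2*u3*u4*u5*u5 + u2*u2*u3*u4*u4*u5 + u2*u2*u3*u3*u5*u6 + u2*u2*u3*u3*u5*u5 + u2*u2*u3*u3*u4*u5 + u2*u2*u2*u5*u5*u6 + u2*u2*u2*u5*u5*u5 + u2*u2*u2*u4*u5*u6 + 2*u2*u2*u2*u4*u5*u5 + u2*u2*u2*u4*u4*u5 + 2*u2*u2*u2*u3*u5*u6 + 2*u2*u2*u2*u3*u5*u5 + 2*u2*u2*u2*u3*u4*u5 + u2*u2*u2*u2*u5*u6 + u2*u2*u2*u2*u5*u5 + u2*u2*u2*u2*u4*u5 + u1*u2*u3*u5*u5*u6 + u1*u2*u3*u5*u5*u5 + 2*u1*u2*u3*u4*u5*u6 + 2*u1*u2*u3*u4*u5*u5 + u1*u2*u3*u4*u4*u6 + u1*u2*u3*u4*u4*u5 + u1*u2*u3*u3*u5*u6 + u1*u2*u3*u3*u5*u5 + u1*u2*u3*u3*u4*u6 + u1*u2*u3*u3*u4*u5 + 2*u1*u2*u2*u5*u5*u6 + 2*u1*u2*u2*u5*u5*u5 + 2*u1*u2*u2*u4*u5*u6 + 4*u1*u2*u2*u4*u5*u5 + 2*u1*u2*u2*u4*u4*u5 + 3*u1*u2*u2*u3*u5*u6 + 3*u1*u2*u2*u3*u5*u5 + u1*u2*u2*u3*u4*u6 + 3*u1*u2*u2*u3*u4*u5 + 2*u1*u2*u2*u2*u5*u6 + 2*u1*u2*u2*u2*u5*u5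 + 2*u1*u2*u2*u2*u4*u5 + u1*u1*u3*u4*u5*u6 + u1*u1*u3*u4*u4*u6 + u1*u1*u3*u3*u4*u6 + u1*u1*u2*u5*u5*u6 + u1*u1*u2*u5*u5*u5 + u1*u1*u2*u4*u5*u6 + 2*u1*u1*u2*u4*u5*u5 + u1*u1*u2*u4*u4*u5 + u1*u1*u2*u3*u5*u6 + u1*u1*u2*u3*u5*u5 + u1*u1*u2*u3*u4*u6 + u1*u1*u2*u3*u4*u5 + u1*u1*u2*u2*u5*u6 + u1*u1*u2*u2*u5*u5 + u1*u1*u2*u2*u4*u5" using p by (intro add_pos_pos mult_pos_pos; simp)
  then show ?thesis using e by linarith
qed

lemma chk_0_5_3: "(Y3 - Y0) * (u1+u2+u3+u4+u5) < (Y5 - Y0) * (u1+u2+u3)"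
proof -
  have e: "(Y5 - Y0) * (u1+u2+u3) - (Y3 - Y0) * (u1+u2+u3+u4+u5) = u1*u2*u3*u5*u5*u6 + u1*u2*u3*u5*u5*u5 + u1*u2*u3*u4*u5*u6 + 2*u1*u2*u3*u4*u5*u5 + u1*u2*u3*u4*u4*u5 + u1*u2*u2*u5*u5*u6 + u1*u2*u2*u5*u5*u5 + u1*u2*u2*u4*u5*u6 + 2*u1*u2*u2*u4*u5*u5 + u1*u2*u2*u4*u4*u5 + u1*u1*u3*u4*u5*u6 + u1*u1*u3*u4*u4*u6 + u1*u1*u2*u5*u5*u6 + u1*u1*u2*u5*u5*u5 + u1*u1*u2*u4*u5*u6 + 2*u1*u1*u2*u4*u5*u5 + u1*u1*u2*u4*u4*u5" unfolding Y gdef by algebra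
  have "0 < u1*u2*u3*u5*u5*u6 + u1*u2*u3*u5*u5*u5 + u1*u2*u3*u4*u5*u6 + 2*u1*u2*u3*u4*u5*u5 + u1*u2*u3*u4*u4*u5 + u1*u2*u2*u5*u5*u6 + u1*u2*u2*u5*u5*u5 + u1*u2*u2*u4*u5*u6 + 2*u1*u2*u2*u4*u5*u5 + u1*u2*u2*u4*u4*u5 + u1*u1*u3*u4*u5*u6 + u1*u1*u3*u4*u4*u6 + u1*u1*u2*u5*u5*u6 + u1*u1*u2*u5*u5*u5 + u1*u1*u2*u4*u5*u6 + 2*u1*u1*u2*u4*u5*u5 + u1*u1*u2*u4*u4*u5" using p by (intro add_pos_pos mult_pos_pos; simp)
  then show ?thesis using e by linarith
qed

lemma chk_0_5_4: "(Y4 - Y0) * (u1+u2+u3+u4+u5) < (Y5 - Y0) * (u1+u2+u3+u4)"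
proof -
  have e: "(Y5 - Y0) * (u1+u2+u3+u4) - (Y4 - Y0) * (u1+u2+u3+u4+u5) = 2*u1*u2*u4*u5*u5*u6 + 2*u1*u2*u4*u5*u5*u5 + 2*u1*u2*u4*u4*u5*u6 + 4*u1*u2*u4*u4*u5*u5 + 2*u1*u2*u4*u4*u4*u5 + u1*u2*u3*u5*u5*u6 + u1*u2*u3*u5*u5*u5 + 2*u1*u2*u3*u4*u5*u6 + 3*u1*u2*u3*u4*u5*u5 + 2*u1*u2*u3*u4*u4*u5 + u1*u2*u2*u5*u5*u6 + u1*u2*u2*u5*u5*u5 + 2*u1*u2*u2*u4*u5*u6 + 3*u1*u2*u2*u4*u5*u5 + 2*u1*u2*u2*u4*u4*u5 + u1*u1*u3*u4*u5*u6 + u1*u1*u2*u5*u5*u6 + u1*u1*u2*u5*u5*u5 + 2*u1*u1*u2*u4*u5*u6 + 3*u1*u1*u2*u4*u5*u5 + 2*u1*u1*u2*u4*u4*u5" unfolding Y gdef by algebra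
  have "0 < 2*u1*u2*u4*u5*u5*u6 + 2*u1*u2*u4*u5*u5*u5 + 2*u1*u2*u4*u4*u5*u6 + 4*u1*u2*u4*u4*u5*u5 + 2*u1*u2*u4*u4*u4*u5 + u1*u2*u3*u5*u5*u6 + u1*u2*u3*u5*u5*u5 + 2*u1*u2*u3*u4*u5*u6 + 3*u1*u2*u3*u4*u5*u5 + 2*u1*u2*u3*u4*u4*u5 + u1*u2*u2*u5*u5*u6 + u1*u2*u2*u5*u5*u5 + 2*u1*u2*u2*u4*u5*u6 + 3*u1*u2*u2*u4*u5*u5 + 2*u1*u2*u2*u4*u4*u5 + u1*u1*u3*u4*u5*u6 + u1*u1*u2*u5*u5*u6 + u1*u1*u2*u5*u5*u5 + 2*u1*u1*u2*u4*u5*u6 + 3*u1*u1*u2*u4*u5*u5 + 2*u1*u1*u2*u4*u4*u5" using p by (intro add_pos_pos mult_pos_pos; simp)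
  then show ?thesis using e by linarith
qed

lemma chk_0_6_1: "(Y1 - Y0) * (u1+u2+u3+u4+u5+u6) < (Y6 - Y0) * (u1)"
proof -
  have e: "(Y6 - Y0) * (u1) - (Y1 - Y0) * (u1+u2+u3+u4+u5+u6) = u1*u2*u3*u5*u6*u6 + 2*u1*u2*u3*u5*u5*u6 + u1*u2*u3*u5*u5*u5 + 2*u1*u2*u3*u4*u5*u6 + 2*u1*u2*u3*u4*u5*u5 + u1*u2*u3*u4*u4*u5 + u1*u2*u3*u3*u5*u6 + u1*u2*u3*u3*u5*u5 + u1*u2*u3*u3*u4*u5 + u1*u2*u2*u5*u6*u6 + 2*u1*u2*u2*u5*u5*u6 + u1*u2*u2*u5*u5*u5 + 2*u1*u2*u2*u4*u5*u6 + 2*u1*u2*u2*u4*u5*u5 + u1*u2*u2*u4*u4*u5 + 2*u1*u2*u2*u3*u5*u6 + 2*u1*u2*u2*u3*u5*u5 + 2*u1*u2*u2*u3*u4*u5 + u1*u2*u2*u2*u5*u6 + u1*u2*u2*u2*u5*u5 + u1*u2*u2*u2*u4*u5 + u1*u1*u3*u4*u6*u6 + u1*u1*u3*u4*u5*u6 + u1*u1*u3*u4*u4*u6 + u1*u1*u3*u3*u4*u6 + u1*u1*u2*u5*u6*u6 + 2*u1*u1*u2*u5*u5*u6 + u1*u1*u2*u5*u5*u5 + 2*u1*u1*u2*u4*u6*u6 + 4*u1*u1*u2*u4*u5*u6 + 2*u1*u1*u2*u4*u5*u5 + 2*u1*u1*u2*u4*u4*u6 + u1*u1*u2*u4*u4*u5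 + u1*u1*u2*u3*u5*u6 + u1*u1*u2*u3*u5*u5 + u1*u1*u2*u3*u4*u6 + u1*u1*u2*u3*u4*u5 + u1*u1*u2*u2*u5*u6 + u1*u1*u2*u2*u5*u5 + u1*u1*u2*u2*u4*u5" unfolding Y gdef by algebra
  have "0 < u1*u2*u3*u5*u6*u6 + 2*u1*u2*u3*u5*u5*u6 + u1*u2*u3*u5*u5*u5 + 2*u1*u2*u3*u4*u5*u6 + 2*u1*u2*u3*u4*u5*u5 + u1*u2*u3*u4*u4*u5 + u1*u2*u3*u3*u5*u6 + u1*u2*u3*u3*u5*u5 + u1*u2*u3*u3*u4*u5 + u1*u2*u2*u5*u6*u6 + 2*u1*u2*u2*u5*u5*u6 + u1*u2*u2*u5*u5*u5 + 2*u1*u2*u2*u4*u5*u6 + 2*u1*u2*u2*u4*u5*u5 + u1*u2*u2*u4*u4*u5 + 2*u1*u2*u2*u3*u5*u6 + 2*u1*u2*u2*u3*u5*u5 + 2*u1*u2*u2*u3*u4*u5 + u1*u2*u2*u2*u5*u6 + u1*u2*u2*u2*u5*u5 + u1*u2*u2*u2*u4*u5 + u1*u1*u3*u4*u6*u6 + u1*u1*u3*u4*u5*u6 + u1*u1*u3*u4*u4*u6 + u1*u1*u3*u3*u4*u6 + u1*u1*u2*u5*u6*u6 + 2*u1*u1*u2*u5*u5*u6 + u1*u1*u2*u5*u5*u5 + 2*u1*u1*u2*u4*u6*u6 + 4*u1*u1*u2*u4*u5*u6 + 2*u1*u1*u2*u4*u5*u5 + 2*u1*u1*u2*u4*u4*u6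 + u1*u1*u2*u4*u4*u5 + u1*u1*u2*u3*u5*u6 + u1*u1*u2*u3*u5*u5 + u1*u1*u2*u3*u4*u6 + u1*u1*u2*u3*u4*u5 + u1*u1*u2*u2*u5*u6 + u1*u1*u2*u2*u5*u5 + u1*u1*u2*u2*u4*u5" using p by (intro add_pos_pos mult_pos_pos; simp)
  then show ?thesis using e by linarith
qed

lemma chk_0_6_2: "(Y2 - Y0) * (u1+u2+u3+u4+u5+u6) < (Y6 - Y0) * (u1+u2)"
proof -
  have e: "(Y6 - Y0) * (u1+u2) - (Y2 - Y0) * (u1+u2+u3+u4+u5+u6) = u2*u2*u3*u5*u6*u6 + 2*u2*u2*u3*u5*u5*u6 + u2*u2*u3*u5*u5*u5 + 2*u2*u2*u3*u4*u5*u6 + 2*u2*u2*u3*u4*u5*u5 + u2*u2*u3*u4*u4*u5 + u2*u2*u3*u3*u5*u6 + u2*u2*u3*u3*u5*u5 + u2*u2*u3*u3*u4*u5 + u2*u2*u2*u5*u6*u6 + 2*u2*u2*u2*u5*u5*u6 + u2*u2*u2*u5*u5*u5 + 2*u2*u2*u2*u4*u5*u6 + 2*u2*u2*u2*u4*u5*u5 + u2*u2*u2*u4*u4*u5 + 2*u2*u2*u2*u3*u5*u6 + 2*u2*u2*u2*u3*u5*u5 + 2*u2*u2*u2*u3*u4*u5 + u2*u2*u2*u2*u5*u6 + u2*u2*u2*u2*u5*u5 + u2*u2*u2*u2*u4*u5 + u1*u2*u3*u5*u6*u6 + 2*u1*u2*u3*u5*u5*u6 + u1*u2*u3*u5*u5*u5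 + u1*u2*u3*u4*u6*u6 + 3*u1*u2*u3*u4*u5*u6 + 2*u1*u2*u3*u4*u5*u5 + u1*u2*u3*u4*u4*u6 + u1*u2*u3*u4*u4*u5 + u1*u2*u3*u3*u5*u6 + u1*u2*u3*u3*u5*u5 + u1*u2*u3*u3*u4*u6 + u1*u2*u3*u3*u4*u5 + 2*u1*u2*u2*u5*u6*u6 + 4*u1*u2*u2*u5*u5*u6 + 2*u1*u2*u2*u5*u5*u5 + 2*u1*u2*u2*u4*u6*u6 + 6*u1*u2*u2*u4*u5*u6 + 4*u1*u2*u2*u4*u5*u5 + 2*u1*u2*u2*u4*u4*u6 + 2*u1*u2*u2*u4*u4*u5 + 3*u1*u2*u2*u3*u5*u6 + 3*u1*u2*u2*u3*u5*u5 + u1*u2*u2*u3*u4*u6 + 3*u1*u2*u2*u3*u4*u5 + 2*u1*u2*u2*u2*u5*u6 + 2*u1*u2*u2*u2*u5*u5 + 2*u1*u2*u2*u2*u4*u5 + u1*u1*u3*u4*u6*u6 + u1*u1*u3*u4*u5*u6 + u1*u1*u3*u4*u4*u6 + u1*u1*u3*u3*u4*u6 + u1*u1*u2*u5*u6*u6 + 2*u1*u1*u2*u5*u5*u6 + u1*u1*u2*u5*u5*u5 + 2*u1*u1*u2*u4*u6*u6 + 4*u1*u1*u2*u4*u5*u6 + 2*u1*u1*u2*u4*u5*u5 + 2*u1*u1*u2*u4*u4*u6 + u1*u1*u2*u4*u4*u5 + u1*u1*u2*u3*u5*u6 + u1*u1*u2*u3*u5*u5 + u1*u1*u2*u3*u4*u6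 + u1*u1*u2*u3*u4*u5 + u1*u1*u2*u2*u5*u6 + u1*u1*u2*u2*u5*u5 + u1*u1*u2*u2*u4*u5" unfolding Y gdef by algebra
  have "0 < u2*u2*u3*u5*u6*u6 + 2*u2*u2*u3*u5*u5*u6 + u2*u2*u3*u5*u5*u5 + 2*u2*u2*u3*u4*u5*u6 + 2*u2*u2*u3*u4*u5*u5 + u2*u2*u3*u4*u4*u5 + u2*u2*u3*u3*u5*u6 + u2*u2*u3*u3*u5*u5 + u2*u2*u3*u3*u4*u5 + u2*u2*u2*u5*u6*u6 + 2*u2*u2*u2*u5*u5*u6 + u2*u2*u2*u5*u5*u5 + 2*u2*u2*u2*u4*u5*u6 + 2*u2*u2*u2*u4*u5*u5 + u2*u2*u2*u4*u4*u5 + 2*u2*u2*u2*u3*u5*u6 + 2*u2*u2*u2*u3*u5*u5 + 2*u2*u2*u2*u3*u4*u5 + u2*u2*u2*u2*u5*u6 + u2*u2*u2*u2*u5*u5 + u2*u2*u2*u2*u4*u5 + u1*u2*u3*u5*u6*u6 + 2*u1*u2*u3*u5*u5*u6 + u1*u2*u3*u5*u5*u5 + u1*u2*u3*u4*u6*u6 + 3*u1*u2*u3*u4*u5*u6 + 2*u1*u2*u3*u4*u5*u5 + u1*u2*u3*u4*u4*u6 + u1*u2*u3*u4*u4*u5 + u1*u2*u3*u3*u5*u6 + u1*u2*u3*u3*u5*u5 + u1*u2*u3*u3*u4*u6 + u1*u2*u3*u3*u4*u5 + 2*u1*u2*u2*u5*u6*u6 + 4*u1*u2*u2*u5*u5*u6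 + 2*u1*u2*u2*u5*u5*u5 + 2*u1*u2*u2*u4*u6*u6 + 6*u1*u2*u2*u4*u5*u6 + 4*u1*u2*u2*u4*u5*u5 + 2*u1*u2*u2*u4*u4*u6 + 2*u1*u2*u2*u4*u4*u5 + 3*u1*u2*u2*u3*u5*u6 + 3*u1*u2*u2*u3*u5*u5 + u1*u2*u2*u3*u4*u6 + 3*u1*u2*u2*u3*u4*u5 + 2*u1*u2*u2*u2*u5*u6 + 2*u1*u2*u2*u2*u5*u5 + 2*u1*u2*u2*u2*u4*u5 + u1*u1*u3*u4*u6*u6 + u1*u1*u3*u4*u5*u6 + u1*u1*u3*u4*u4*u6 + u1*u1*u3*u3*u4*u6 + u1*u1*u2*u5*u6*u6 + 2*u1*u1*u2*u5*u5*u6 + u1*u1*u2*u5*u5*u5 + 2*u1*u1*u2*u4*u6*u6 + 4*u1*u1*u2*u4*u5*u6 + 2*u1*u1*u2*u4*u5*u5 + 2*u1*u1*u2*u4*u4*u6 + u1*u1*u2*u4*u4*u5 + u1*u1*u2*u3*u5*u6 + u1*u1*u2*u3*u5*u5 + u1*u1*u2*u3*u4*u6 + u1*u1*u2*u3*u4*u5 + u1*u1*u2*u2*u5*u6 + u1*u1*u2*u2*u5*u5 + u1*u1*u2*u2*u4*u5" using p by (intro add_pos_pos mult_pos_pos; simp)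
  then show ?thesis using e by linarith
qed

lemma chk_0_6_3: "(Y3 - Y0) * (u1+u2+u3+u4+u5+u6) < (Y6 - Y0) * (u1+u2+u3)"
proof -
  have e: "(Y6 - Y0) * (u1+u2+u3) - (Y3 - Y0) * (u1+u2+u3+u4+u5+u6) = u1*u2*u3*u5*u6*u6 + 2*u1*u2*u3*u5*u5*u6 + u1*u2*u3*u5*u5*u5 + 2*u1*u2*u3*u4*u6*u6 + 4*u1*u2*u3*u4*u5*u6 + 2*u1*u2*u3*u4*u5*u5 + 2*u1*u2*u3*u4*u4*u6 + u1*u2*u3*u4*u4*u5 + u1*u2*u2*u5*u6*u6 + 2*u1*u2*u2*u5*u5*u6 + u1*u2*u2*u5*u5*u5 + 2*u1*u2*u2*u4*u6*u6 + 4*u1*u2*u2*u4*u5*u6 + 2*u1*u2*u2*u4*u5*u5 + 2*u1*u2*u2*u4*u4*u6 + u1*u2*u2*u4*u4*u5 + u1*u1*u3*u4*u6*u6 + u1*u1*u3*u4*u5*u6 + u1*u1*u3*u4*u4*u6 + u1*u1*u2*u5*u6*u6 + 2*u1*u1*u2*u5*u5*u6 + u1*u1*u2*u5*u5*u5 + 2*u1*u1*u2*u4*u6*u6 + 4*u1*u1*u2*u4*u5*u6 + 2*u1*u1*u2*u4*u5*u5 + 2*u1*u1*u2*u4*u4*u6 + u1*u1*u2*u4*u4*u5" unfolding Y gdef by algebra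
  have "0 < u1*u2*u3*u5*u6*u6 + 2*u1*u2*u3*u5*u5*u6 + u1*u2*u3*u5*u5*u5 + 2*u1*u2*u3*u4*u6*u6 + 4*u1*u2*u3*u4*u5*u6 + 2*u1*u2*u3*u4*u5*u5 + 2*u1*u2*u3*u4*u4*u6 + u1*u2*u3*u4*u4*u5 + u1*u2*u2*u5*u6*u6 + 2*u1*u2*u2*u5*u5*u6 + u1*u2*u2*u5*u5*u5 + 2*u1*u2*u2*u4*u6*u6 + 4*u1*u2*u2*u4*u5*u6 + 2*u1*u2*u2*u4*u5*u5 + 2*u1*u2*u2*u4*u4*u6 + u1*u2*u2*u4*u4*u5 + u1*u1*u3*u4*u6*u6 + u1*u1*u3*u4*u5*u6 + u1*u1*u3*u4*u4*u6 + u1*u1*u2*u5*u6*u6 + 2*u1*u1*u2*u5*u5*u6 + u1*u1*u2*u5*u5*u5 + 2*u1*u1*u2*u4*u6*u6 + 4*u1*u1*u2*u4*u5*u6 + 2*u1*u1*u2*u4*u5*u5 + 2*u1*u1*u2*u4*u4*u6 + u1*u1*u2*u4*u4*u5" using p by (intro add_pos_pos mult_pos_pos; simp)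
  then show ?thesis using e by linarith
qed

lemma chk_0_6_4: "(Y4 - Y0) * (u1+u2+u3+u4+u5+u6) < (Y6 - Y0) * (u1+u2+u3+u4)"
proof -
  have e: "(Y6 - Y0) * (u1+u2+u3+u4) - (Y4 - Y0) * (u1+u2+u3+u4+u5+u6) = 2*u1*u2*u4*u5*u6*u6 + 4*u1*u2*u4*u5*u5*u6 + 2*u1*u2*u4*u5*u5*u5 + 2*u1*u2*u4*u4*u6*u6 + 6*u1*u2*u4*u4*u5*u6 + 4*u1*u2*u4*u4*u5*u5 + 2*u1*u2*u4*u4*u4*u6 + 2*u1*u2*u4*u4*u4*u5 + u1*u2*u3*u5*u6*u6 + 2*u1*u2*u3*u5*u5*u6 + u1*u2*u3*u5*u5*u5 + 2*u1*u2*u3*u4*u6*u6 + 5*u1*u2*u3*u4*u5*u6 + 3*u1*u2*u3*u4*u5*u5 + 2*u1*u2*u3*u4*u4*u6 + 2*u1*u2*u3*u4*u4*u5 + u1*u2*u2*u5*u6*u6 + 2*u1*u2*u2*u5*u5*u6 + u1*u2*u2*u5*u5*u5 + 2*u1*u2*u2*u4*u6*u6 + 5*u1*u2*u2*u4*u5*u6 + 3*u1*u2*u2*u4*u5*u5 + 2*u1*u2*u2*u4*u4*u6 + 2*u1*u2*u2*u4*u4*u5 + u1*u1*u3*u4*u6*u6 + u1*u1*u3*u4*u5*u6 + u1*u1*u2*u5*u6*u6 + 2*u1*u1*u2*u5*u5*u6 + u1*u1*u2*u5*u5*u5 + 2*u1*u1*u2*u4*u6*u6 + 5*u1*u1*u2*u4*u5*u6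 + 3*u1*u1*u2*u4*u5*u5 + 2*u1*u1*u2*u4*u4*u6 + 2*u1*u1*u2*u4*u4*u5" unfolding Y gdef by algebra
  have "0 < 2*u1*u2*u4*u5*u6*u6 + 4*u1*u2*u4*u5*u5*u6 + 2*u1*u2*u4*u5*u5*u5 + 2*u1*u2*u4*u4*u6*u6 + 6*u1*u2*u4*u4*u5*u6 + 4*u1*u2*u4*u4*u5*u5 + 2*u1*u2*u4*u4*u4*u6 + 2*u1*u2*u4*u4*u4*u5 + u1*u2*u3*u5*u6*u6 + 2*u1*u2*u3*u5*u5*u6 + u1*u2*u3*u5*u5*u5 + 2*u1*u2*u3*u4*u6*u6 + 5*u1*u2*u3*u4*u5*u6 + 3*u1*u2*u3*u4*u5*u5 + 2*u1*u2*u3*u4*u4*u6 + 2*u1*u2*u3*u4*u4*u5 + u1*u2*u2*u5*u6*u6 + 2*u1*u2*u2*u5*u5*u6 + u1*u2*u2*u5*u5*u5 + 2*u1*u2*u2*u4*u6*u6 + 5*u1*u2*u2*u4*u5*u6 + 3*u1*u2*u2*u4*u5*u5 + 2*u1*u2*u2*u4*u4*u6 + 2*u1*u2*u2*u4*u4*u5 + u1*u1*u3*u4*u6*u6 + u1*u1*u3*u4*u5*u6 + u1*u1*u2*u5*u6*u6 + 2*u1*u1*u2*u5*u5*u6 + u1*u1*u2*u5*u5*u5 + 2*u1*u1*u2*u4*u6*u6 + 5*u1*u1*u2*u4*u5*u6 + 3*u1*u1*u2*u4*u5*u5 + 2*u1*u1*u2*u4*u4*u6 + 2*u1*u1*u2*u4*u4*u5"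 using p by (intro add_pos_pos mult_pos_pos; simp)
  then show ?thesis using e by linarith
qed

lemma chk_0_6_5: "(Y5 - Y0) * (u1+u2+u3+u4+u5+u6) < (Y6 - Y0) * (u1+u2+u3+u4+u5)"
proof -
  have e: "(Y6 - Y0) * (u1+u2+u3+u4+u5) - (Y5 - Y0) * (u1+u2+u3+u4+u5+u6) = 2*u1*u2*u4*u5*u6*u6 + 2*u1*u2*u4*u5*u5*u6 + 2*u1*u2*u4*u4*u6*u6 + 4*u1*u2*u4*u4*u5*u6 + 2*u1*u2*u4*u4*u4*u6 + u1*u2*u3*u5*u6*u6 + u1*u2*u3*u5*u5*u6 + 2*u1*u2*u3*u4*u6*u6 + 3*u1*u2*u3*u4*u5*u6 + 2*u1*u2*u3*u4*u4*u6 + u1*u2*u2*u5*u6*u6 + u1*u2*u2*u5*u5*u6 + 2*u1*u2*u2*u4*u6*u6 + 3*u1*u2*u2*u4*u5*u6 + 2*u1*u2*u2*u4*u4*u6 + u1*u1*u3*u4*u6*u6 + u1*u1*u2*u5*u6*u6 + u1*u1*u2*u5*u5*u6 + 2*u1*u1*u2*u4*u6*u6 + 3*u1*u1*u2*u4*u5*u6 + 2*u1*u1*u2*u4*u4*u6" unfolding Y gdef by algebra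
  have "0 < 2*u1*u2*u4*u5*u6*u6 + 2*u1*u2*u4*u5*u5*u6 + 2*u1*u2*u4*u4*u6*u6 + 4*u1*u2*u4*u4*u5*u6 + 2*u1*u2*u4*u4*u4*u6 + u1*u2*u3*u5*u6*u6 + u1*u2*u3*u5*u5*u6 + 2*u1*u2*u3*u4*u6*u6 + 3*u1*u2*u3*u4*u5*u6 + 2*u1*u2*u3*u4*u4*u6 + u1*u2*u2*u5*u6*u6 + u1*u2*u2*u5*u5*u6 + 2*u1*u2*u2*u4*u6*u6 + 3*u1*u2*u2*u4*u5*u6 + 2*u1*u2*u2*u4*u4*u6 + u1*u1*u3*u4*u6*u6 + u1*u1*u2*u5*u6*u6 + u1*u1*u2*u5*u5*u6 + 2*u1*u1*u2*u4*u6*u6 + 3*u1*u1*u2*u4*u5*u6 + 2*u1*u1*u2*u4*u4*u6" using p by (intro add_pos_pos mult_pos_pos; simp)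
  then show ?thesis using e by linarith
qed

lemma chk_1_3_2: "(Y2 - Y1) * (u2+u3) < (Y3 - Y1) * (u2)"
proof -
  have e: "(Y3 - Y1) * (u2) - (Y2 - Y1) * (u2+u3) = u2*u2*u3*u3*u5*u6 + u2*u2*u3*u3*u5*u5 + u2*u2*u3*u3*u4*u5 + 2*u2*u2*u2*u3*u5*u6 + 2*u2*u2*u2*u3*u5*u5 + 2*u2*u2*u2*u3*u4*u5 + u2*u2*u2*u2*u5*u6 + u2*u2*u2*u2*u5*u5 + u2*u2*u2*u2*u4*u5 + u1*u2*u3*u3*u4*u6 + u1*u2*u2*u3*u5*u6 + u1*u2*u2*u3*u5*u5 + u1*u2*u2*u3*u4*u6 + u1*u2*u2*u3*u4*u5 + u1*u2*u2*u2*u5*u6 + u1*u2*u2*u2*u5*u5 + u1*u2*u2*u2*u4*u5" unfolding Y gdef by algebra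
  have "0 < u2*u2*u3*u3*u5*u6 + u2*u2*u3*u3*u5*u5 + u2*u2*u3*u3*u4*u5 + 2*u2*u2*u2*u3*u5*u6 + 2*u2*u2*u2*u3*u5*u5 + 2*u2*u2*u2*u3*u4*u5 + u2*u2*u2*u2*u5*u6 + u2*u2*u2*u2*u5*u5 + u2*u2*u2*u2*u4*u5 + u1*u2*u3*u3*u4*u6 + u1*u2*u2*u3*u5*u6 + u1*u2*u2*u3*u5*u5 + u1*u2*u2*u3*u4*u6 + u1*u2*u2*u3*u4*u5 + u1*u2*u2*u2*u5*u6 + u1*u2*u2*u2*u5*u5 + u1*u2*u2*u2*u4*u5" using p by (intro add_pos_pos mult_pos_pos; simp)
  then show ?thesis using e by linarith
qed

lemma chk_1_4_3: "\<not> ((Y3 - Y1) * (u2+u3+u4) < (Y4 - Y1) * (u2+u3))"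
proof -
  have e: "(Y3 - Y1) * (u2+u3+u4) - (Y4 - Y1) * (u2+u3) = 2*u1*u2*u3*u4*u5*u6 + 2*u1*u2*u3*u4*u5*u5 + 2*u1*u2*u3*u4*u4*u5 + 2*u1*u2*u2*u4*u5*u6 + 2*u1*u2*u2*u4*u5*u5 + 2*u1*u2*u2*u4*u4*u5" unfolding Y gdef by algebra
  have "0 < 2*u1*u2*u3*u4*u5*u6 + 2*u1*u2*u3*u4*u5*u5 + 2*u1*u2*u3*u4*u4*u5 + 2*u1*u2*u2*u4*u5*u6 + 2*u1*u2*u2*u4*u5*u5 + 2*u1*u2*u2*u4*u4*u5" using p by (intro add_pos_pos mult_pos_pos; simp)
  then show ?thesis using e by linarith
qed

lemma chk_1_5_3: "\<not> ((Y3 - Y1) * (u2+u3+u4+u5) < (Y5 - Y1) * (u2+u3))"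
proof -
  have e: "(Y3 - Y1) * (u2+u3+u4+u5) - (Y5 - Y1) * (u2+u3) = 0" unfolding Y gdef by algebra
  then show ?thesis by linarith
qed

lemma chk_1_6_2: "(Y2 - Y1) * (u2+u3+u4+u5+u6) < (Y6 - Y1) * (u2)"
proof -
  have e: "(Y6 - Y1) * (u2) - (Y2 - Y1) * (u2+u3+u4+u5+u6) = u2*u2*u3*u5*u6*u6 + 2*u2*u2*u3*u5*u5*u6 + u2*u2*u3*u5*u5*u5 + 2*u2*u2*u3*u4*u5*u6 + 2*u2*u2*u3*u4*u5*u5 + u2*u2*u3*u4*u4*u5 + u2*u2*u3*u3*u5*u6 + u2*u2*u3*u3*u5*u5 + u2*u2*u3*u3*u4*u5 + u2*u2*u2*u5*u6*u6 + 2*u2*u2*u2*u5*u5*u6 + u2*u2*u2*u5*u5*u5 + 2*u2*u2*u2*u4*u5*u6 + 2*u2*u2*u2*u4*u5*u5 + u2*u2*u2*u4*u4*u5 + 2*u2*u2*u2*u3*u5*u6 + 2*u2*u2*u2*u3*u5*u5 + 2*u2*u2*u2*u3*u4*u5 + u2*u2*u2*u2*u5*u6 + u2*u2*u2*u2*u5*u5 + u2*u2*u2*u2*u4*u5 + u1*u2*u3*u4*u6*u6 + u1*u2*u3*u4*u5*u6 + u1*u2*u3*u4*u4*u6 + u1*u2*u3*u3*u4*u6 + u1*u2*u2*u5*u6*u6 + 2*u1*u2*u2*u5*u5*u6 + u1*u2*u2*u5*u5*u5 + 2*u1*u2*u2*u4*u6*u6 + 4*u1*u2*u2*u4*u5*u6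 + 2*u1*u2*u2*u4*u5*u5 + 2*u1*u2*u2*u4*u4*u6 + u1*u2*u2*u4*u4*u5 + u1*u2*u2*u3*u5*u6 + u1*u2*u2*u3*u5*u5 + u1*u2*u2*u3*u4*u6 + u1*u2*u2*u3*u4*u5 + u1*u2*u2*u2*u5*u6 + u1*u2*u2*u2*u5*u5 + u1*u2*u2*u2*u4*u5" unfolding Y gdef by algebra
  have "0 < u2*u2*u3*u5*u6*u6 + 2*u2*u2*u3*u5*u5*u6 + u2*u2*u3*u5*u5*u5 + 2*u2*u2*u3*u4*u5*u6 + 2*u2*u2*u3*u4*u5*u5 + u2*u2*u3*u4*u4*u5 + u2*u2*u3*u3*u5*u6 + u2*u2*u3*u3*u5*u5 + u2*u2*u3*u3*u4*u5 + u2*u2*u2*u5*u6*u6 + 2*u2*u2*u2*u5*u5*u6 + u2*u2*u2*u5*u5*u5 + 2*u2*u2*u2*u4*u5*u6 + 2*u2*u2*u2*u4*u5*u5 + u2*u2*u2*u4*u4*u5 + 2*u2*u2*u2*u3*u5*u6 + 2*u2*u2*u2*u3*u5*u5 + 2*u2*u2*u2*u3*u4*u5 + u2*u2*u2*u2*u5*u6 + u2*u2*u2*u2*u5*u5 + u2*u2*u2*u2*u4*u5 + u1*u2*u3*u4*u6*u6 + u1*u2*u3*u4*u5*u6 + u1*u2*u3*u4*u4*u6 + u1*u2*u3*u3*u4*u6 + u1*u2*u2*u5*u6*u6 + 2*u1*u2*u2*u5*u5*u6 + u1*u2*u2*u5*u5*u5 + 2*u1*u2*u2*u4*u6*u6 +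 4*u1*u2*u2*u4*u5*u6 + 2*u1*u2*u2*u4*u5*u5 + 2*u1*u2*u2*u4*u4*u6 + u1*u2*u2*u4*u4*u5 + u1*u2*u2*u3*u5*u6 + u1*u2*u2*u3*u5*u5 + u1*u2*u2*u3*u4*u6 + u1*u2*u2*u3*u4*u5 + u1*u2*u2*u2*u5*u6 + u1*u2*u2*u2*u5*u5 + u1*u2*u2*u2*u4*u5" using p by (intro add_pos_pos mult_pos_pos; simp)
  then show ?thesis using e by linarith
qed

lemma chk_1_6_3: "(Y3 - Y1) * (u2+u3+u4+u5+u6) < (Y6 - Y1) * (u2+u3)"
proof -
  have e: "(Y6 - Y1) * (u2+u3) - (Y3 - Y1) * (u2+u3+u4+u5+u6) = 2*u1*u2*u3*u4*u6*u6 + 2*u1*u2*u3*u4*u5*u6 + 2*u1*u2*u3*u4*u4*u6 + 2*u1*u2*u2*u4*u6*u6 + 2*u1*u2*u2*u4*u5*u6 + 2*u1*u2*u2*u4*u4*u6" unfolding Y gdef by algebra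
  have "0 < 2*u1*u2*u3*u4*u6*u6 + 2*u1*u2*u3*u4*u5*u6 + 2*u1*u2*u3*u4*u4*u6 + 2*u1*u2*u2*u4*u6*u6 + 2*u1*u2*u2*u4*u5*u6 + 2*u1*u2*u2*u4*u4*u6" using p by (intro add_pos_pos mult_pos_pos; simp)
  then show ?thesis using e by linarith
qed

lemma chk_1_6_4: "(Y4 - Y1) * (u2+u3+u4+u5+u6) < (Y6 - Y1) * (u2+u3+u4)"
proof -
  have e: "(Y6 - Y1) * (u2+u3+u4) - (Y4 - Y1) * (u2+u3+u4+u5+u6) = 2*u1*u2*u4*u5*u6*u6 + 4*u1*u2*u4*u5*u5*u6 + 2*u1*u2*u4*u5*u5*u5 + 2*u1*u2*u4*u4*u6*u6 + 6*u1*u2*u4*u4*u5*u6 + 4*u1*u2*u4*u4*u5*u5 + 2*u1*u2*u4*u4*u4*u6 + 2*u1*u2*u4*u4*u4*u5 + 2*u1*u2*u3*u4*u6*u6 + 4*u1*u2*u3*u4*u5*u6 + 2*u1*u2*u3*u4*u5*u5 + 2*u1*u2*u3*u4*u4*u6 + 2*u1*u2*u3*u4*u4*u5 + 2*u1*u2*u2*u4*u6*u6 + 4*u1*u2*u2*u4*u5*u6 + 2*u1*u2*u2*u4*u5*u5 + 2*u1*u2*u2*u4*u4*u6 + 2*u1*u2*u2*u4*u4*u5" unfolding Y gdef by algebra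
  have "0 < 2*u1*u2*u4*u5*u6*u6 + 4*u1*u2*u4*u5*u5*u6 + 2*u1*u2*u4*u5*u5*u5 + 2*u1*u2*u4*u4*u6*u6 + 6*u1*u2*u4*u4*u5*u6 + 4*u1*u2*u4*u4*u5*u5 + 2*u1*u2*u4*u4*u4*u6 + 2*u1*u2*u4*u4*u4*u5 + 2*u1*u2*u3*u4*u6*u6 + 4*u1*u2*u3*u4*u5*u6 + 2*u1*u2*u3*u4*u5*u5 + 2*u1*u2*u3*u4*u4*u6 + 2*u1*u2*u3*u4*u4*u5 + 2*u1*u2*u2*u4*u6*u6 + 4*u1*u2*u2*u4*u5*u6 + 2*u1*u2*u2*u4*u5*u5 + 2*u1*u2*u2*u4*u4*u6 + 2*u1*u2*u2*u4*u4*u5" using p by (intro add_pos_pos mult_pos_pos; simp)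
  then show ?thesis using e by linarith
qed

lemma chk_1_6_5: "(Y5 - Y1) * (u2+u3+u4+u5+u6) < (Y6 - Y1) * (u2+u3+u4+u5)"
proof -
  have e: "(Y6 - Y1) * (u2+u3+u4+u5) - (Y5 - Y1) * (u2+u3+u4+u5+u6) = 2*u1*u2*u4*u5*u6*u6 + 2*u1*u2*u4*u5*u5*u6 + 2*u1*u2*u4*u4*u6*u6 + 4*u1*u2*u4*u4*u5*u6 + 2*u1*u2*u4*u4*u4*u6 + 2*u1*u2*u3*u4*u6*u6 + 2*u1*u2*u3*u4*u5*u6 + 2*u1*u2*u3*u4*u4*u6 + 2*u1*u2*u2*u4*u6*u6 + 2*u1*u2*u2*u4*u5*u6 + 2*u1*u2*u2*u4*u4*u6" unfolding Y gdef by algebra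
  have "0 < 2*u1*u2*u4*u5*u6*u6 + 2*u1*u2*u4*u5*u5*u6 + 2*u1*u2*u4*u4*u6*u6 + 4*u1*u2*u4*u4*u5*u6 + 2*u1*u2*u4*u4*u4*u6 + 2*u1*u2*u3*u4*u6*u6 + 2*u1*u2*u3*u4*u5*u6 + 2*u1*u2*u3*u4*u4*u6 + 2*u1*u2*u2*u4*u6*u6 + 2*u1*u2*u2*u4*u5*u6 + 2*u1*u2*u2*u4*u4*u6" using p by (intro add_pos_pos mult_pos_pos; simp)
  then show ?thesis using e by linarith
qed

lemma chk_2_4_3: "\<not> ((Y3 - Y2) * (u3+u4) < (Y4 - Y2) * (u3))"
proof -
  have e: "(Y3 - Y2) * (u3+u4) - (Y4 - Y2) * (u3) = (u4)*(u2)*((u1)*(u3)*((u5+u6)*(u4+u5) + (u4+u5+u6)*(u5)) + ((u2)*(u5)*(u1+u2+u3)*(u4+u5+u6)))" unfolding Y gdef by algebra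
  have "0 < (u4)*(u2)*((u1)*(u3)*((u5+u6)*(u4+u5) + (u4+u5+u6)*(u5)) + ((u2)*(u5)*(u1+u2+u3)*(u4+u5+u6)))" using p by (intro add_pos_pos mult_pos_pos; simp)
  then show ?thesis using e by linarith
qed

lemma chk_2_5_3: "\<not> ((Y3 - Y2) * (u3+u4+u5) < (Y5 - Y2) * (u3))"
proof -
  have e: "(Y3 - Y2) * (u3+u4+u5) - (Y5 - Y2) * (u3) = (u4+u5)*(u2)*(((u1)*(u3)*(u4)*(u6)) + ((u2)*(u5)*(u1+u2+u3)*(u4+u5+u6)))" unfolding Y gdef by algebra
  have "0 < (u4+u5)*(u2)*(((u1)*(u3)*(u4)*(u6)) + ((u2)*(u5)*(u1+u2+u3)*(u4+u5+u6)))" using p by (intro add_pos_pos mult_pos_pos; simp)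
  then show ?thesis using e by linarith
qed

lemma chk_2_6_3: "(Y3 - Y2) * (u3+u4+u5+u6) < (Y6 - Y2) * (u3)"
proof -
  have e: "(Y6 - Y2) * (u3) - (Y3 - Y2) * (u3+u4+u5+u6) = u2*u6*g + u2*u5*g + u2*u4*g" unfolding Y gdef by algebra
  have "0 < u2*u6*g + u2*u5*g + u2*u4*g" using p by (intro add_pos_pos mult_pos_pos; simp)
  then show ?thesis using e by linarith
qed

lemma chk_2_6_4: "(Y4 - Y2) * (u3+u4+u5+u6) < (Y6 - Y2) * (u3+u4)"
proof -
  have e: "(Y6 - Y2) * (u3+u4) - (Y4 - Y2) * (u3+u4+u5+u6) = u2*u6*g + u2*u5*g + 2*u1*u2*u4*u5*u6*u6 + 4*u1*u2*u4*u5*u5*u6 + 2*u1*u2*u4*u5*u5*u5 + 2*u1*u2*u4*u4*u6*u6 + 6*u1*u2*u4*u4*u5*u6 + 4*u1*u2*u4*u4*u5*u5 + 2*u1*u2*u4*u4*u4*u6 + 2*u1*u2*u4*u4*u4*u5 + 2*u1*u2*u3*u4*u5*u6 + 2*u1*u2*u3*u4*u5*u5 + 2*u1*u2*u3*u4*u4*u6 + 2*u1*u2*u3*u4*u4*u5" unfolding Y gdef by algebra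
  have "0 < u2*u6*g + u2*u5*g + 2*u1*u2*u4*u5*u6*u6 + 4*u1*u2*u4*u5*u5*u6 + 2*u1*u2*u4*u5*u5*u5 + 2*u1*u2*u4*u4*u6*u6 + 6*u1*u2*u4*u4*u5*u6 + 4*u1*u2*u4*u4*u5*u5 + 2*u1*u2*u4*u4*u4*u6 + 2*u1*u2*u4*u4*u4*u5 + 2*u1*u2*u3*u4*u5*u6 + 2*u1*u2*u3*u4*u5*u5 + 2*u1*u2*u3*u4*u4*u6 + 2*u1*u2*u3*u4*u4*u5" using p by (intro add_pos_pos mult_pos_pos; simp)
  then show ?thesis using e by linarith
qed

lemma chk_2_6_5: "(Y5 - Y2) * (u3+u4+u5+u6) < (Y6 - Y2) * (u3+u4+u5)"
proof -
  have e: "(Y6 - Y2) * (u3+u4+u5) - (Y5 - Y2) * (u3+u4+u5+u6) = u2*u6*g + 2*u1*u2*u4*u5*u6*u6 + 2*u1*u2*u4*u5*u5*u6 + 2*u1*u2*u4*u4*u6*u6 + 4*u1*u2*u4*u4*u5*u6 + 2*u1*u2*u4*u4*u4*u6 + 2*u1*u2*u3*u4*u5*u6 + 2*u1*u2*u3*u4*u4*u6" unfolding Y gdef by algebra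
  have "0 < u2*u6*g + 2*u1*u2*u4*u5*u6*u6 + 2*u1*u2*u4*u5*u5*u6 + 2*u1*u2*u4*u4*u6*u6 + 4*u1*u2*u4*u4*u5*u6 + 2*u1*u2*u4*u4*u4*u6 + 2*u1*u2*u3*u4*u5*u6 + 2*u1*u2*u3*u4*u4*u6" using p by (intro add_pos_pos mult_pos_pos; simp)
  then show ?thesis using e by linarith
qed

lemma chk_3_5_4: "(Y4 - Y3) * (u4+u5) < (Y5 - Y3) * (u4)"
proof -
  have e: "(Y5 - Y3) * (u4) - (Y4 - Y3) * (u4+u5) = 2*u1*u2*u4*u5*u5*u6 + 2*u1*u2*u4*u5*u5*u5 + 2*u1*u2*u4*u4*u5*u6 + 4*u1*u2*u4*u4*u5*u5 + 2*u1*u2*u4*u4*u4*u5" unfolding Y gdef by algebra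
  have "0 < 2*u1*u2*u4*u5*u5*u6 + 2*u1*u2*u4*u5*u5*u5 + 2*u1*u2*u4*u4*u5*u6 + 4*u1*u2*u4*u4*u5*u5 + 2*u1*u2*u4*u4*u4*u5" using p by (intro add_pos_pos mult_pos_pos; simp)
  then show ?thesis using e by linarith
qed

lemma chk_3_6_4: "(Y4 - Y3) * (u4+u5+u6) < (Y6 - Y3) * (u4)"
proof -
  have e: "(Y6 - Y3) * (u4) - (Y4 - Y3) * (u4+u5+u6) = 2*u1*u2*u4*u5*u6*u6 + 4*u1*u2*u4*u5*u5*u6 + 2*u1*u2*u4*u5*u5*u5 + 2*u1*u2*u4*u4*u6*u6 + 6*u1*u2*u4*u4*u5*u6 + 4*u1*u2*u4*u4*u5*u5 + 2*u1*u2*u4*u4*u4*u6 + 2*u1*u2*u4*u4*u4*u5" unfolding Y gdef by algebra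
  have "0 < 2*u1*u2*u4*u5*u6*u6 + 4*u1*u2*u4*u5*u5*u6 + 2*u1*u2*u4*u5*u5*u5 + 2*u1*u2*u4*u4*u6*u6 + 6*u1*u2*u4*u4*u5*u6 + 4*u1*u2*u4*u4*u5*u5 + 2*u1*u2*u4*u4*u4*u6 + 2*u1*u2*u4*u4*u4*u5" using p by (intro add_pos_pos mult_pos_pos; simp)
  then show ?thesis using e by linarith
qed

lemma chk_3_6_5: "(Y5 - Y3) * (u4+u5+u6) < (Y6 - Y3) * (u4+u5)"
proof -
  have e: "(Y6 - Y3) * (u4+u5) - (Y5 - Y3) * (u4+u5+u6) = 2*u1*u2*u4*u5*u6*u6 + 2*u1*u2*u4*u5*u5*u6 + 2*u1*u2*u4*u4*u6*u6 + 4*u1*u2*u4*u4*u5*u6 + 2*u1*u2*u4*u4*u4*u6" unfolding Y gdef by algebra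
  have "0 < 2*u1*u2*u4*u5*u6*u6 + 2*u1*u2*u4*u5*u5*u6 + 2*u1*u2*u4*u4*u6*u6 + 4*u1*u2*u4*u4*u5*u6 + 2*u1*u2*u4*u4*u4*u6" using p by (intro add_pos_pos mult_pos_pos; simp)
  then show ?thesis using e by linarith
qed

lemma chk_4_6_5: "\<not> ((Y5 - Y4) * (u5+u6) < (Y6 - Y4) * (u5))"
proof -
  have e: "(Y5 - Y4) * (u5+u6) - (Y6 - Y4) * (u5) = 0" unfolding Y gdef by algebra
  then show ?thesis by linarith
qed

end


theorem lemma2:
  fixes x :: "nat \<Rightarrow> real"
  assumes "\<forall>i j. i < j \<and> j \<le> 6 \<longrightarrow> x i < x j"
  shows "(\<exists>py :: nat \<Rightarrow> real. is_terrain 7 x \<and>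
            (\<forall>a b. a \<le> 6 \<and> b \<le> 6 \<longrightarrow> (vis_edge 7 x py a b \<longleftrightarrow> {a, b} \<in> G'_edges)))
         \<longleftrightarrow>
         (x 1 - x 0) * (x 3 - x 2) * (x 4 - x 3) * (x 6 - x 5)
           > (x 2 - x 1) * (x 5 - x 4) * (x 3 - x 0) * (x 6 - x 3)"
proof -
  have lt: "\<And>i j. i < j \<Longrightarrow> j \<le> 6 \<Longrightarrow> x i < x j" using assms by blast
  have o: "x 0 < x 1" "x 0 < x 2" "x 0 < x 3" "x 0 < x 4" "x 0 < x 5" "x 0 < x 6" "x 1 < x 2" "x 1 < x 3" "x 1 < x 4" "x 1 < x 5" "x 1 < x 6" "x 2 < x 3" "x 2 < x 4" "x 2 < x 5" "x 2 < x 6" "x 3 < x 4" "x 3 < x 5" "x 3 < x 6" "x 4 < x 5" "x 4 < x 6" "x 5 < x 6" by (simp_all add: lt)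
  have terr: "is_terrain 7 x" unfolding is_terrain_def using lt by auto
  have "(\<exists>py :: nat \<Rightarrow> real. is_terrain 7 x \<and>
            (\<forall>a b. a \<le> 6 \<and> b \<le> 6 \<longrightarrow> (vis_edge 7 x py a b \<longleftrightarrow> {a, b} \<in> G'_edges)))
        \<longleftrightarrow> (\<exists>P. (\<not> sees x P 0 2 \<and> sees x P 0 3 \<and> sees x P 0 4 \<and> sees x P 0 5 \<and> sees x P 0 6 \<and>
    sees x P 1 3 \<and> \<not> sees x P 1 4 \<and> \<not> sees x P 1 5 \<and> sees x P 1 6 \<and>
    \<not> sees x P 2 4 \<and> \<not> sees x P 2 5 \<and> sees x P 2 6 \<and>
    sees x P 3 5 \<and> sees x P 3 6 \<and> \<not> sees x P 4 6))"
    using terr graph_iff by simp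
  also have "\<dots> \<longleftrightarrow> (x 1 - x 0) * (x 3 - x 2) * (x 4 - x 3) * (x 6 - x 5)
           > (x 2 - x 1) * (x 5 - x 4) * (x 3 - x 0) * (x 6 - x 3)"
  proof
    assume "\<exists>P. (\<not> sees x P 0 2 \<and> sees x P 0 3 \<and> sees x P 0 4 \<and> sees x P 0 5 \<and> sees x P 0 6 \<and>
    sees x P 1 3 \<and> \<not> sees x P 1 4 \<and> \<not> sees x P 1 5 \<and> sees x P 1 6 \<and>
    \<not> sees x P 2 4 \<and> \<not> sees x P 2 5 \<and> sees x P 2 6 \<and>
    sees x P 3 5 \<and> sees x P 3 6 \<and> \<not> sees x P 4 6)"
    then obtain py where Cpy: "(\<not> sees x py 0 2 \<and> sees x py 0 3 \<and> sees x py 0 4 \<and> sees x py 0 5 \<and> sees x py 0 6 \<and>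
    sees x py 1 3 \<and> \<not> sees x py 1 4 \<and> \<not> sees x py 1 5 \<and> sees x py 1 6 \<and>
    \<not> sees x py 2 4 \<and> \<not> sees x py 2 5 \<and> sees x py 2 6 \<and>
    sees x py 3 5 \<and> sees x py 3 6 \<and> \<not> sees x py 4 6)" by blast
    define s where "s = (py 6 - py 3) / (x 6 - x 3)"
    define z where "z k = py k + (- s) * x k + (s * x 3 - py 3)" for k
    have zs: "sees x z i j \<longleftrightarrow> sees x py i j" if "i < j" "j \<le> 6" for i j
      unfolding z_def using sees_shear[of i j x py "- s" "s * x 3 - py 3"] lt[OF that] by simp
    have Cz: "(\<not> sees x z 0 2 \<and> sees x z 0 3 \<and> sees x z 0 4 \<and> sees x z 0 5 \<and> sees x z 0 6 \<and>
    sees x z 1 3 \<and> \<not> sees x z 1 4 \<and> \<not> sees x z 1 5 \<and> sees x z 1 6 \<and>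
    \<not> sees x z 2 4 \<and> \<not> sees x z 2 5 \<and> sees x z 2 6 \<and>
    sees x z 3 5 \<and> sees x z 3 6 \<and> \<not> sees x z 4 6)" using Cpy by (simp add: zs)
    have z3: "z 3 = 0" by (simp add: z_def)
    have z6: "z 6 = 0" using o(18) by (simp add: z_def s_def field_simps)
    show "(x 1 - x 0) * (x 3 - x 2) * (x 4 - x 3) * (x 6 - x 5)
           > (x 2 - x 1) * (x 5 - x 4) * (x 3 - x 0) * (x 6 - x 3)"
    proof (rule fwd_core[where y = z])
      show "z 3 = 0" "z 6 = 0" by (fact z3, fact z6)
      show "x 0 < x 1" "x 1 < x 2" "x 2 < x 3" "x 3 < x 4" "x 4 < x 5" "x 5 < x 6" using o by simp_all
      show "strictly_below x z 0 4 3"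
        "\<not> strictly_below x z 1 5 2 \<or> \<not> strictly_below x z 1 5 3 \<or> \<not> strictly_below x z 1 5 4"
        "\<not> strictly_below x z 1 4 2 \<or> \<not> strictly_below x z 1 4 3"
        "strictly_below x z 1 3 2" "strictly_below x z 2 6 3" "\<not> strictly_below x z 0 2 1"
        "\<not> strictly_below x z 4 6 5" "strictly_below x z 3 6 4"
        using Cz unfolding sees_expand by blast+
    qed
  next
    assume ineq: "(x 1 - x 0) * (x 3 - x 2) * (x 4 - x 3) * (x 6 - x 5)
           > (x 2 - x 1) * (x 5 - x 4) * (x 3 - x 0) * (x 6 - x 3)"
    define u1 where "u1 = x 1 - x 0"
    define u2 where "u2 = x 2 - x 1"
    define u3 where "u3 = x 3 - x 2"
    define u4 where "u4 = x 4 - x 3"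
    define u5 where "u5 = x 5 - x 4"
    define u6 where "u6 = x 6 - x 5"
    have dx: "x 1 - x 0 = u1" "x 2 - x 0 = u1+u2" "x 3 - x 0 = u1+u2+u3" "x 4 - x 0 = u1+u2+u3+u4" "x 5 - x 0 = u1+u2+u3+u4+u5" "x 6 - x 0 = u1+u2+u3+u4+u5+u6" "x 2 - x 1 = u2" "x 3 - x 1 = u2+u3" "x 4 - x 1 = u2+u3+u4" "x 5 - x 1 = u2+u3+u4+u5" "x 6 - x 1 = u2+u3+u4+u5+u6" "x 3 - x 2 = u3" "x 4 - x 2 = u3+u4" "x 5 - x 2 = u3+u4+u5" "x 6 - x 2 = u3+u4+u5+u6" "x 4 - x 3 = u4" "x 5 - x 3 = u4+u5" "x 6 - x 3 = u4+u5+u6" "x 5 - x 4 = u5" "x 6 - x 4 = u5+u6" "x 6 - x 5 = u6"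
      by (simp_all add: u1_def u2_def u3_def u4_def u5_def u6_def)
    define g where "g = u1*u3*u4*u6 - u2*u5*(u1+u2+u3)*(u4+u5+u6)"
    have gpos: "0 < g" using ineq unfolding g_def dx by simp
    define Y0 where "Y0 = 2*u1*u6*(u2+u3)*u4*(u1+u2) - u1*g"
    define Y1 where "Y1 = 2*u1*u6*(u2+u3)*u4*u2"
    define Y2 where "Y2 = g*u2"
    define Y3 where "Y3 = (0::real)"
    define Y4 where "Y4 = -(2*u1*(u5+u6)*(u4+u5)*u4*u2)"
    define Y5 where "Y5 = -(2*u1*u6*(u4+u5)*u4*u2)"
    define Y6 where "Y6 = (0::real)"
    interpret B: bwd_setup u1 u2 u3 u4 u5 u6 g Y0 Y1 Y2 Y3 Y4 Y5 Y6
      by (unfold_locales) (use o gpos in \<open>simp_all add: dx[symmetric] g_def Y0_def Y1_def Y2_def Y3_def Y4_def Y5_def Y6_def\<close>)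
    define py where "py k = (if k = 0 then Y0 else if k = 1 then Y1 else if k = 2 then Y2 else
       if k = 3 then Y3 else if k = 4 then Y4 else if k = 5 then Y5 else Y6)" for k :: nat
    have pyv: "py 0 = Y0" "py 1 = Y1" "py 2 = Y2" "py 3 = Y3" "py 4 = Y4" "py 5 = Y5" "py 6 = Y6"
      by (simp_all add: py_def)
    have "(\<not> sees x py 0 2 \<and> sees x py 0 3 \<and> sees x py 0 4 \<and> sees x py 0 5 \<and> sees x py 0 6 \<and>
    sees x py 1 3 \<and> \<not> sees x py 1 4 \<and> \<not> sees x py 1 5 \<and> sees x py 1 6 \<and>
    \<not> sees x py 2 4 \<and> \<not> sees x py 2 5 \<and> sees x py 2 6 \<and>
    sees x py 3 5 \<and> sees x py 3 6 \<and> \<not> sees x py 4 6)"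
      unfolding sees_expand
      apply (simp only: sb_mult[OF o(1)] sb_mult[OF o(2)] sb_mult[OF o(3)] sb_mult[OF o(4)] sb_mult[OF o(5)] sb_mult[OF o(6)] sb_mult[OF o(7)] sb_mult[OF o(8)] sb_mult[OF o(9)] sb_mult[OF o(10)] sb_mult[OF o(11)] sb_mult[OF o(12)] sb_mult[OF o(13)] sb_mult[OF o(14)] sb_mult[OF o(15)] sb_mult[OF o(16)] sb_mult[OF o(17)] sb_mult[OF o(18)] sb_mult[OF o(19)] sb_mult[OF o(20)] sb_mult[OF o(21)])
      apply (simp only: pyv dx)
      using B.chk_0_2_1 B.chk_0_3_1 B.chk_0_3_2 B.chk_0_4_1 B.chk_0_4_2 B.chk_0_4_3 B.chk_0_5_1 B.chk_0_5_2 B.chk_0_5_3 B.chk_0_5_4 B.chk_0_6_1 B.chk_0_6_2 B.chk_0_6_3 B.chk_0_6_4 B.chk_0_6_5 B.chk_1_3_2 B.chk_1_4_3 B.chk_1_5_3 B.chk_1_6_2 B.chk_1_6_3 B.chk_1_6_4 B.chk_1_6_5 B.chk_2_4_3 B.chk_2_5_3 B.chk_2_6_3 B.chk_2_6_4 B.chk_2_6_5 B.chk_3_5_4 B.chk_3_6_4 B.chk_3_6_5 B.chk_4_6_5 by blast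
    then show "\<exists>P. (\<not> sees x P 0 2 \<and> sees x P 0 3 \<and> sees x P 0 4 \<and> sees x P 0 5 \<and> sees x P 0 6 \<and>
    sees x P 1 3 \<and> \<not> sees x P 1 4 \<and> \<not> sees x P 1 5 \<and> sees x P 1 6 \<and>
    \<not> sees x P 2 4 \<and> \<not> sees x P 2 5 \<and> sees x P 2 6 \<and>
    sees x P 3 5 \<and> sees x P 3 6 \<and> \<not> sees x P 4 6)" by blast
  qed
  finally show ?thesis .
qed

end
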